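(* Let $d\ge1$, $\lambda>0$, $\delta>0$, and let $f:\mathbb{R}^d\to\mathbb{R}$ satisfy: (A1) $f$ is continuous and has at least one minimizer; (A2) $C_\delta:=\int_{\mathbb{R}^d}\exp(-f(y)/\delta)\,dy<+\infty$. Then for all $z\in\mathbb{R}^d$, \[H_{\lambda,\delta}(z)\ge-\log C_\delta+\frac d2\log(2\pi\lambda\delta);\] in particular $H_{\lambda,\delta}$ is bounded below.
   Context: The zeroth-order proximal operator $T:=\operatorname{zprox}^\delta_{\lambda,f}$ is $T(x)=\dfrac{\mathbb{E}_{y\sim\mathcal N(x,\lambda\delta I)}[y\exp(-f(y)/\delta)]}{\mathbb{E}_{y\sim\mathcal N(x,\lambda\delta I)}[\exp(-f(y)/\delta)]}$; under (A1)–(A2) it is a bijection of $\mathbb{R}^d$. The soft Moreau envelope is $f^{\lambda,\delta}(x)=-\delta\log\mathbb{E}_{y\sim\mathcal N(x,\lambda\delta I)}[\exp(-f(y)/\delta)]$. $H_{\lambda,\delta}(x)=-\frac{1}{2\lambda\delta}\|T^{-1}(x)-x\|^2+\frac1\delta f^{\lambda,\delta}(T^{-1}(x))$. *)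

theory Defs
  imports "HOL-Analysis.Analysis"
begin

definition gauss_dens :: "real \<Rightarrow> 'a::euclidean_space \<Rightarrow> 'a \<Rightarrow> real" where
  "gauss_dens s x y = (2 * pi * s) powr (- real DIM('a) / 2) * exp (- (norm (y - x))\<^sup>2 / (2 * s))"

definition gauss_exp :: "real \<Rightarrow> 'a::euclidean_space \<Rightarrow> ('a \<Rightarrow> 'b::{banach, second_countable_topology}) \<Rightarrow> 'b" where
  "gauss_exp s x g = (\<integral>y. gauss_dens s x y *\<^sub>R g y \<partial>lborel)"

definition zprox :: "real \<Rightarrow> real \<Rightarrow> ('a::euclidean_space \<Rightarrow> real) \<Rightarrow> 'a \<Rightarrow> 'a" where
  "zprox lam del f x =
     gauss_exp (lam * del) x (\<lambda>y. exp (- f y / del) *\<^sub>R y) /\<^sub>R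
     gauss_exp (lam * del) x (\<lambda>y. exp (- f y / del))"

definition soft_moreau :: "real \<Rightarrow> real \<Rightarrow> ('a::euclidean_space \<Rightarrow> real) \<Rightarrow> 'a \<Rightarrow> real" where
  "soft_moreau lam del f x = - del * ln (gauss_exp (lam * del) x (\<lambda>y. exp (- f y / del)))"

definition H_fun :: "real \<Rightarrow> real \<Rightarrow> ('a::euclidean_space \<Rightarrow> real) \<Rightarrow> 'a \<Rightarrow> real" where
  "H_fun lam del f x =
     (let w = inv (zprox lam del f) x in
      - (1 / (2 * lam * del)) * (norm (w - x))\<^sup>2 + (1 / del) * soft_moreau lam del f w)"

end

theory Submission
  imports Defs
begin


locale setting =
  fixes s :: real and h :: "'a::euclidean_space \<Rightarrow> real"
  assumes s_pos: "s > 0" and h_pos: "\<And>y. h y > 0" and h_cont: "continuous_on UNIV h"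
    and h_int: "integrable lborel h"
begin

definition c0 :: real where "c0 = (2 * pi * s) powr (- real DIM('a) / 2)"
definition "G w = (\<integral>y. gauss_dens s w y * h y \<partial>lborel)"
definition "N w = (\<integral>y. gauss_dens s w y *\<^sub>R (h y *\<^sub>R y) \<partial>lborel)"

lemma c0_pos: "c0 > 0" using s_pos by (simp add: c0_def)

lemma gd_eq: "gauss_dens s w (y::'a) = c0 * exp (- (norm (y - w))\<^sup>2 / (2 * s))"
  by (simp add: gauss_dens_def c0_def)

lemma gd_pos: "gauss_dens s w (y::'a) > 0" using c0_pos by (simp add: gd_eq)

lemma gd_le: "gauss_dens s w (y::'a) \<le> c0"
proof -
  have "exp (- (norm (y - w))\<^sup>2 / (2 * s)) \<le> 1" using s_pos by simp
  then show ?thesis using c0_pos by (simp add: gd_eq)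
qed

lemma gd_cont: "continuous_on UNIV (\<lambda>p::'a*'a. gauss_dens s (fst p) (snd p))"
  unfolding gd_eq by (intro continuous_intros) (use s_pos in auto)

lemma gd_cont_y: "continuous_on UNIV (\<lambda>y::'a. gauss_dens s w y)"
  unfolding gd_eq by (intro continuous_intros) (use s_pos in auto)

lemma gd_cont_w: "continuous_on UNIV (\<lambda>w::'a. gauss_dens s w y)"
  unfolding gd_eq by (intro continuous_intros) (use s_pos in auto)

lemma h_meas[measurable]: "h \<in> borel_measurable lborel"
  using borel_measurable_continuous_onI[OF h_cont] by simp

lemma gd_meas[measurable]: "(\<lambda>y::'a. gauss_dens s w y) \<in> borel_measurable lborel"
  using borel_measurable_continuous_onI[OF gd_cont_y] by simp

lemma intG: "integrable lborel (\<lambda>y. gauss_dens s w y * h y)"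
proof (rule Bochner_Integration.integrable_bound[OF integrable_mult_right[OF h_int, of c0]])
  show "AE y in lborel. norm (gauss_dens s w y * h y) \<le> norm (c0 * h y)"
  proof (intro AE_I2)
    fix y
    have "gauss_dens s w y * h y \<le> c0 * h y"
      using gd_le h_pos by (intro mult_right_mono) (auto intro: less_imp_le)
    then show "norm (gauss_dens s w y * h y) \<le> norm (c0 * h y)"
      using gd_pos[of w y] h_pos[of y] c0_pos by (simp add: abs_of_pos)
  qed
qed measurable

lemma lin_bound: "norm ((y::'a) - w) * exp (- (norm (y - w))\<^sup>2 / (2 * s)) \<le> s/2 + 1"
proof -
  define x where "x = norm (y - w)"
  define a where "a = x\<^sup>2 / (2* s)"
  have a0: "a \<ge> 0" using s_pos by (simp add: a_def)
  have "0 \<le> (x - s)\<^sup>2" by simp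
  moreover have "(x - s)\<^sup>2 = x\<^sup>2 + s\<^sup>2 - 2 * s * x" by (simp add: power2_eq_square algebra_simps)
  ultimately have "2 * s * x \<le> s\<^sup>2 + x\<^sup>2" by linarith
  then have x1: "x \<le> s/2 + a" using s_pos unfolding a_def by (simp add: field_simps power2_eq_square)
  have e1: "1 + a \<le> exp a" by (rule exp_ge_add_one_self)
  have "s/2 * 1 \<le> s/2 * exp a" using a0 s_pos by (intro mult_left_mono) auto
  then have "s/2 + a \<le> s/2 * exp a + exp a" using e1 by linarith
  also have "\<dots> = (s/2+1) * exp a" by (simp add: algebra_simps)
  finally have "s/2 + a \<le> (s/2+1) * exp a" .
  with x1 have "x \<le> (s/2+1) * exp a" by linarith
  then have "x * exp (-a) \<le> (s/2+1) * exp a * exp (-a)" by (simp add: mult_right_mono)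
  also have "\<dots> = s/2+1" by (simp add: exp_minus field_simps)
  finally show ?thesis by (simp add: x_def a_def)
qed

lemma intN: "integrable lborel (\<lambda>y. gauss_dens s w y *\<^sub>R (h y *\<^sub>R y))"
proof (rule Bochner_Integration.integrable_bound[OF integrable_mult_right[OF h_int, of "c0 * (norm w + s/2 + 1)"]])
  show "AE y in lborel. norm (gauss_dens s w y *\<^sub>R (h y *\<^sub>R y)) \<le> norm (c0 * (norm w + s/2 + 1) * h y)"
  proof (intro AE_I2)
    fix y
    have "gauss_dens s w y * norm y \<le> gauss_dens s w y * (norm w + norm (y - w))"
      using gd_pos[of w y] norm_triangle_sub[of y w] by (intro mult_left_mono) auto
    also have "\<dots> = gauss_dens s w y * norm w + c0 * (norm (y - w) * exp (- (norm (y - w))\<^sup>2 / (2 * s)))"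
      by (simp add: gd_eq algebra_simps)
    also have "\<dots> \<le> c0 * norm w + c0 * (s/2+1)"
      using gd_le lin_bound c0_pos by (intro add_mono mult_left_mono mult_right_mono) auto
    finally have *: "gauss_dens s w y * norm y \<le> c0 * (norm w + s/2 + 1)" by (simp add: algebra_simps)
    have "norm (gauss_dens s w y *\<^sub>R (h y *\<^sub>R y)) = (gauss_dens s w y * norm y) * h y"
      using gd_pos h_pos by (simp add: abs_of_pos)
    also have "\<dots> \<le> c0 * (norm w + s/2 + 1) * h y"
      using * h_pos by (intro mult_right_mono) (auto intro: less_imp_le)
    finally show "norm (gauss_dens s w y *\<^sub>R (h y *\<^sub>R y)) \<le> norm (c0 * (norm w + s/2 + 1) * h y)"
      using h_pos c0_pos s_pos by (simp add: abs_of_pos)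
  qed
qed measurable

end


lemma exp_quad_bound:
  fixes t Y :: real assumes "\<bar>t\<bar> \<le> 1"
  shows "exp (t * Y) \<le> 1 + t * Y + t\<^sup>2 * (exp (2 * Y) + exp (- 2 * Y))"
proof -
  obtain \<xi> where xi: "\<bar>\<xi>\<bar> \<le> \<bar>t * Y\<bar>" and e: "exp (t * Y) = (\<Sum>m<2. (t * Y) ^ m / fact m) + exp \<xi> / fact 2 * (t * Y) ^ 2"
    using Maclaurin_exp_le[of "t * Y" 2] by blast
  have e2: "exp (t * Y) = 1 + t * Y + exp \<xi> / 2 * (t\<^sup>2 * Y\<^sup>2)"
    using e by (simp add: numeral_2_eq_2 power_mult_distrib)
  have "\<bar>t * Y\<bar> \<le> \<bar>Y\<bar>" using assms by (simp add: abs_mult mult_left_le_one_le)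
  then have "exp \<xi> \<le> exp \<bar>Y\<bar>" using xi by simp
  moreover have "Y\<^sup>2 \<le> 2 * exp \<bar>Y\<bar>"
    using exp_lower_Taylor_quadratic[of "\<bar>Y\<bar>"] by simp
  ultimately have "exp \<xi> / 2 * Y\<^sup>2 \<le> exp \<bar>Y\<bar> / 2 * (2 * exp \<bar>Y\<bar>)"
    by (intro mult_mono) auto
  also have "\<dots> = exp (2 * \<bar>Y\<bar>)" by (simp add: exp_add[symmetric])
  also have "\<dots> \<le> exp (2 * Y) + exp (- 2 * Y)" by (cases "Y \<ge> 0") auto
  finally have "t\<^sup>2 * (exp \<xi> / 2 * Y\<^sup>2) \<le> t\<^sup>2 * (exp (2 * Y) + exp (- 2 * Y))"
    by (intro mult_left_mono) auto
  then show ?thesis using e2 by (simp add: algebra_simps)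
qed

context setting begin

lemma shift: "gauss_dens s w y * exp (((y - w) \<bullet> u) / s) = exp ((norm u)\<^sup>2 / (2 * s)) * gauss_dens s (w + u) (y::'a)"
proof -
  have n: "(norm (y - (w + u)))\<^sup>2 = (norm (y - w))\<^sup>2 - 2 * ((y - w) \<bullet> u) + (norm u)\<^sup>2"
    by (simp add: power2_norm_eq_inner inner_diff_left inner_diff_right inner_add_left inner_add_right inner_commute algebra_simps)
  have "- (norm (y - w))\<^sup>2 / (2 * s) + ((y - w) \<bullet> u) / s = (norm u)\<^sup>2 / (2 * s) + - (norm (y - (w + u)))\<^sup>2 / (2 * s)"
    using s_pos unfolding n by (simp add: field_simps)
  then show ?thesis unfolding gd_eq
    by (metis (no_types, lifting) exp_add mult.assoc mult.left_commute)
qed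

lemma intY: "integrable lborel (\<lambda>y. gauss_dens s w y * h y * ((y - w) \<bullet> u))"
  and intY_eq: "(\<integral>y. gauss_dens s w y * h y * ((y - w) \<bullet> u) \<partial>lborel) = (N w - G w *\<^sub>R w) \<bullet> u"
proof -
  have eq: "(\<lambda>y. gauss_dens s w y * h y * ((y - w) \<bullet> u)) =
     (\<lambda>y. (gauss_dens s w y *\<^sub>R (h y *\<^sub>R y)) \<bullet> u - gauss_dens s w y * h y * (w \<bullet> u))"
    by (auto simp: inner_diff_left algebra_simps)
  show "integrable lborel (\<lambda>y. gauss_dens s w y * h y * ((y - w) \<bullet> u))"
    unfolding eq using intN intG by (intro Bochner_Integration.integrable_diff integrable_inner_left integrable_mult_left) auto
  show "(\<integral>y. gauss_dens s w y * h y * ((y - w) \<bullet> u) \<partial>lborel) = (N w - G w *\<^sub>R w) \<bullet> u"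
  proof -
    have "(\<integral>y. (gauss_dens s w y *\<^sub>R (h y *\<^sub>R y)) \<bullet> u - gauss_dens s w y * h y * (w \<bullet> u) \<partial>lborel)
       = (\<integral>y. (gauss_dens s w y *\<^sub>R (h y *\<^sub>R y)) \<bullet> u \<partial>lborel) - (\<integral>y. gauss_dens s w y * h y * (w \<bullet> u) \<partial>lborel)"
      by (intro Bochner_Integration.integral_diff integrable_inner_left integrable_mult_left intN intG)
    also have "(\<integral>y. (gauss_dens s w y *\<^sub>R (h y *\<^sub>R y)) \<bullet> u \<partial>lborel) = N w \<bullet> u"
      unfolding N_def using intN[of w] by (intro integral_inner_left) auto
    also have "(\<integral>y. gauss_dens s w y * h y * (w \<bullet> u) \<partial>lborel) = G w * (w \<bullet> u)"
      unfolding G_def by (rule integral_mult_left_zero)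
    finally show ?thesis unfolding eq by (simp add: inner_diff_left)
  qed
qed

lemma int_shift: "integrable lborel (\<lambda>y. gauss_dens s w y * h y * exp (((y - w) \<bullet> u) / s))"
proof -
  have "(\<lambda>y. gauss_dens s w y * h y * exp (((y - w) \<bullet> u) / s)) =
        (\<lambda>y. exp ((norm u)\<^sup>2 / (2 * s)) * (gauss_dens s (w + u) y * h y))"
    using shift by (auto simp: algebra_simps)
  then show ?thesis using intG by simp
qed

lemma partA:
  assumes "N w = G w *\<^sub>R (w + u)"
  shows "G (w + u) \<ge> exp ((norm u)\<^sup>2 / (2 * s)) * G w"
proof -
  define c where "c = (norm u)\<^sup>2 / s"
  define F where "F y = gauss_dens s w y * h y" for y
  have F0: "F y \<ge> 0" for y using gd_pos[of w y] h_pos[of y] by (simp add: F_def)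
  have eqG: "G (w + u) = exp (- (norm u)\<^sup>2 / (2 * s)) * (\<integral>y. F y * exp (((y - w) \<bullet> u) / s) \<partial>lborel)"
  proof -
    have "(\<lambda>y. gauss_dens s (w + u) y * h y) = (\<lambda>y. exp (- (norm u)\<^sup>2 / (2 * s)) * (F y * exp (((y - w) \<bullet> u) / s)))"
    proof
      fix y
      have "exp (- (norm u)\<^sup>2 / (2 * s)) * (F y * exp (((y - w) \<bullet> u) / s)) =
        exp (- (norm u)\<^sup>2 / (2 * s)) * (exp ((norm u)\<^sup>2 / (2 * s)) * gauss_dens s (w + u) y) * h y"
        unfolding F_def shift[symmetric] by (simp add: algebra_simps)
      also have "\<dots> = gauss_dens s (w + u) y * h y" by (simp add: exp_minus field_simps)
      finally show "gauss_dens s (w + u) y * h y = exp (- (norm u)\<^sup>2 / (2 * s)) * (F y * exp (((y - w) \<bullet> u) / s))" by simp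
    qed
    then show ?thesis unfolding G_def by simp
  qed
  have pw: "F y * exp (((y - w) \<bullet> u) / s) \<ge> exp c * (F y + F y * ((y - w) \<bullet> u) / s - c * F y)" for y
  proof -
    have "exp (((y - w) \<bullet> u) / s) = exp c * exp (((y - w) \<bullet> u) / s - c)" by (simp add: exp_diff)
    also have "\<dots> \<ge> exp c * (1 + (((y - w) \<bullet> u) / s - c))"
      by (intro mult_left_mono exp_ge_add_one_self) auto
    finally have "F y * exp (((y - w) \<bullet> u) / s) \<ge> F y * (exp c * (1 + (((y - w) \<bullet> u) / s - c)))"
      using F0 by (intro mult_left_mono) auto
    then show ?thesis by (simp add: algebra_simps)
  qed
  have iF: "integrable lborel F" using intG unfolding F_def by simp
  have iFY: "integrable lborel (\<lambda>y. F y * ((y - w) \<bullet> u) / s)" using intY unfolding F_def by simp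
  have "(\<integral>y. exp c * (F y + F y * ((y - w) \<bullet> u) / s - c * F y) \<partial>lborel) \<le> (\<integral>y. F y * exp (((y - w) \<bullet> u) / s) \<partial>lborel)"
    using pw int_shift iF iFY unfolding F_def
    by (intro Bochner_Integration.integral_mono) (auto intro!: Bochner_Integration.integrable_diff Bochner_Integration.integrable_add integrable_mult_right)
  moreover have "(\<integral>y. exp c * (F y + F y * ((y - w) \<bullet> u) / s - c * F y) \<partial>lborel) = exp c * G w"
  proof -
    have "(\<integral>y. F y * ((y - w) \<bullet> u) / s \<partial>lborel) = ((N w - G w *\<^sub>R w) \<bullet> u) / s"
      using intY_eq unfolding F_def by simp
    also have "\<dots> = c * G w" using assms s_pos by (simp add: c_def algebra_simps power2_norm_eq_inner)
    finally have 1: "(\<integral>y. F y * ((y - w) \<bullet> u) / s \<partial>lborel) = c * G w" .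
    have "(\<integral>y. exp c * (F y + F y * ((y - w) \<bullet> u) / s - c * F y) \<partial>lborel)
        = exp c * ((\<integral>y. F y \<partial>lborel) + (\<integral>y. F y * ((y - w) \<bullet> u) / s \<partial>lborel) - c * (\<integral>y. F y \<partial>lborel))"
      using iF iFY by (simp add: Bochner_Integration.integral_diff Bochner_Integration.integral_add)
    also have "\<dots> = exp c * G w" unfolding 1 by (simp add: G_def F_def)
    finally show ?thesis .
  qed
  ultimately have "exp c * G w \<le> (\<integral>y. F y * exp (((y - w) \<bullet> u) / s) \<partial>lborel)" by simp
  then have "exp (- (norm u)\<^sup>2 / (2 * s)) * (exp c * G w) \<le> G (w + u)"
    unfolding eqG by (intro mult_left_mono) auto
  moreover have "exp (- (norm u)\<^sup>2 / (2 * s)) * exp c = exp ((norm u)\<^sup>2 / (2 * s))"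
    unfolding c_def exp_add[symmetric] using s_pos by (simp add: field_simps)
  ultimately show ?thesis by (metis mult.assoc)
qed

end

context setting begin

lemma G_nonneg: "G w \<ge> 0"
  unfolding G_def using gd_pos h_pos by (intro integral_nonneg_AE AE_I2) (auto intro: less_imp_le)

lemma G_pos: "G w > 0"
proof (rule ccontr)
  assume "\<not> G w > 0"
  then have "G w = 0" using G_nonneg[of w] by simp
  then have "AE y in lborel. gauss_dens s w y * h y = 0"
    unfolding G_def using intG gd_pos h_pos
    by (subst (asm) integral_nonneg_eq_0_iff_AE) (auto intro!: AE_I2 less_imp_le)
  moreover have "\<And>y. gauss_dens s w y * h y \<noteq> 0" using gd_pos h_pos by (simp add: less_imp_neq[symmetric])
  ultimately have "AE (y::'a) in lborel. False" by simp
  then obtain M :: "'a set" where "{x \<in> space lborel. \<not> False} \<subseteq> M" "emeasure lborel M = 0" "M \<in> sets lborel"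
    by (erule AE_E)
  then have "emeasure lborel (UNIV::'a set) \<le> emeasure lborel M" by (intro emeasure_mono) auto
  then show False using \<open>emeasure lborel M = 0\<close> by simp
qed

lemma G_le: "G w \<le> c0 * (\<integral>y. h y \<partial>lborel)"
proof -
  have "G w \<le> (\<integral>y. c0 * h y \<partial>lborel)"
    unfolding G_def using intG h_int gd_le h_pos
    by (intro Bochner_Integration.integral_mono) (auto intro!: mult_right_mono less_imp_le)
  then show ?thesis by simp
qed

lemma G_cont: "continuous_on UNIV G"
proof (unfold continuous_on_sequentially, intro allI ballI impI, elim conjE)
  fix x :: "nat \<Rightarrow> 'a" and a assume lim: "x \<longlonglongrightarrow> a"
  have "(\<lambda>i. \<integral>y. gauss_dens s (x i) y * h y \<partial>lborel) \<longlonglongrightarrow> (\<integral>y. gauss_dens s a y * h y \<partial>lborel)"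
  proof (rule integral_dominated_convergence[where w = "\<lambda>y. c0 * h y"])
    show "integrable lborel (\<lambda>y. c0 * h y)" using h_int by simp
    show "AE y in lborel. (\<lambda>i. gauss_dens s (x i) y * h y) \<longlonglongrightarrow> gauss_dens s a y * h y"
      unfolding gd_eq by (intro AE_I2 tendsto_intros lim) (use s_pos in auto)
    show "AE y in lborel. norm (gauss_dens s (x i) y * h y) \<le> c0 * h y" for i
    proof (intro AE_I2)
      fix y
      have "gauss_dens s (x i) y * h y \<le> c0 * h y"
        using gd_le h_pos by (intro mult_right_mono) (auto intro: less_imp_le)
      then show "norm (gauss_dens s (x i) y * h y) \<le> c0 * h y"
        using gd_pos[of "x i" y] h_pos[of y] by (simp add: abs_of_pos)
    qed
  qed measurable
  then show "(G \<circ> x) \<longlonglongrightarrow> G a" by (simp add: G_def o_def)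
qed

lemma upper:
  assumes "0 < t" "t \<le> 1"
  shows "G (w + t *\<^sub>R v) \<le> G w + t / s * ((N w - G w *\<^sub>R w) \<bullet> v)
           + t\<^sup>2 * exp (2 * (norm v)\<^sup>2 / s) * (G (w + 2 *\<^sub>R v) + G (w - 2 *\<^sub>R v))"
proof -
  define E where "E = exp (2 * (norm v)\<^sup>2 / s)"
  define F where "F y = gauss_dens s w y * h y" for y
  define R where "R y = F y + t / s * (F y * ((y - w) \<bullet> v)) + t\<^sup>2 * E * (gauss_dens s (w + 2 *\<^sub>R v) y * h y + gauss_dens s (w - 2 *\<^sub>R v) y * h y)" for y
  have pw: "gauss_dens s (w + t *\<^sub>R v) y * h y \<le> R y" for y
  proof -
    define Y where "Y = ((y - w) \<bullet> v) / s"
    have sh1: "gauss_dens s w y * exp (t * Y) = exp ((norm (t *\<^sub>R v))\<^sup>2 / (2 * s)) * gauss_dens s (w + t *\<^sub>R v) y"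
      using shift[of w y "t *\<^sub>R v"] by (simp add: Y_def inner_scaleR_right)
    have "gauss_dens s (w + t *\<^sub>R v) y \<le> exp ((norm (t *\<^sub>R v))\<^sup>2 / (2 * s)) * gauss_dens s (w + t *\<^sub>R v) y"
    proof -
      have "1 \<le> exp ((norm (t *\<^sub>R v))\<^sup>2 / (2 * s))" using s_pos by simp
      from mult_right_mono[OF this, of "gauss_dens s (w + t *\<^sub>R v) y"] show ?thesis
        using gd_pos[of "w + t *\<^sub>R v" y] by simp
    qed
    also have "\<dots> = gauss_dens s w y * exp (t * Y)" using sh1 by simp
    also have "\<dots> \<le> gauss_dens s w y * (1 + t * Y + t\<^sup>2 * (exp (2 * Y) + exp (- 2 * Y)))"
      using gd_pos[of w y] assms by (intro mult_left_mono exp_quad_bound) auto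
    also have "\<dots> = gauss_dens s w y + t * (gauss_dens s w y * Y) + t\<^sup>2 * (gauss_dens s w y * exp (2 * Y) + gauss_dens s w y * exp (- 2 * Y))"
      by (simp add: algebra_simps)
    also have "gauss_dens s w y * exp (2 * Y) = E * gauss_dens s (w + 2 *\<^sub>R v) y"
      using shift[of w y "2 *\<^sub>R v"] by (simp add: Y_def E_def inner_scaleR_right power_mult_distrib)
    also have "gauss_dens s w y * exp (- 2 * Y) = E * gauss_dens s (w - 2 *\<^sub>R v) y"
      using shift[of w y "(-2) *\<^sub>R v"] by (simp add: Y_def E_def inner_scaleR_right power_mult_distrib)
    finally have "gauss_dens s (w + t *\<^sub>R v) y \<le> gauss_dens s w y + t * (gauss_dens s w y * Y) + t\<^sup>2 * (E * gauss_dens s (w + 2 *\<^sub>R v) y + E * gauss_dens s (w - 2 *\<^sub>R v) y)" .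
    then have "gauss_dens s (w + t *\<^sub>R v) y * h y \<le> (gauss_dens s w y + t * (gauss_dens s w y * Y) + t\<^sup>2 * (E * gauss_dens s (w + 2 *\<^sub>R v) y + E * gauss_dens s (w - 2 *\<^sub>R v) y)) * h y"
      using h_pos[of y] by (intro mult_right_mono) auto
    also have "\<dots> = R y" using s_pos by (simp add: R_def F_def Y_def field_simps)
    finally show ?thesis .
  qed
  have iR: "integrable lborel R"
    unfolding R_def F_def using intG intY
    by (intro Bochner_Integration.integrable_add integrable_mult_right) auto
  have "G (w + t *\<^sub>R v) \<le> (\<integral>y. R y \<partial>lborel)"
    unfolding G_def using pw iR intG by (intro Bochner_Integration.integral_mono) auto
  also have "(\<integral>y. R y \<partial>lborel) = G w + t / s * ((N w - G w *\<^sub>R w) \<bullet> v) + t\<^sup>2 * E * (G (w + 2 *\<^sub>R v) + G (w - 2 *\<^sub>R v))"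
  proof -
    have i1: "integrable lborel F" using intG unfolding F_def by simp
    have i2: "integrable lborel (\<lambda>y. F y * ((y - w) \<bullet> v))" using intY unfolding F_def by simp
    have "(\<integral>y. R y \<partial>lborel) = (\<integral>y. F y \<partial>lborel) + t / s * (\<integral>y. F y * ((y - w) \<bullet> v) \<partial>lborel)
         + t\<^sup>2 * E * ((\<integral>y. gauss_dens s (w + 2 *\<^sub>R v) y * h y \<partial>lborel) + (\<integral>y. gauss_dens s (w - 2 *\<^sub>R v) y * h y \<partial>lborel))"
      unfolding R_def using i1 i2 intG by (simp add: Bochner_Integration.integral_add)
    then show ?thesis using intY_eq[of w v] by (simp add: G_def F_def)
  qed
  finally show ?thesis by (simp add: E_def)
qed

end


lemma small_t:
  fixes q K :: real
  assumes "q > 0" "K \<ge> 0" "\<And>t. 0 < t \<Longrightarrow> t \<le> 1 \<Longrightarrow> q \<le> t * K"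
  shows False
proof -
  define t where "t = min 1 (q / (2 * (K + 1)))"
  have t0: "0 < t" "t \<le> 1" using assms by (auto simp: t_def)
  have "t * K \<le> q / (2 * (K + 1)) * K" using assms t0 by (intro mult_right_mono) (auto simp: t_def)
  also have "\<dots> = q / 2 * (K / (K + 1))" by (simp add: field_simps)
  also have "\<dots> \<le> q / 2 * 1" using assms by (intro mult_left_mono) auto
  finally show False using assms(3)[OF t0] assms(1) by linarith
qed

lemma alg:
  fixes g0 s nv K t b c :: real
  assumes "g0 > 0" "s > 0" "nv > 0" "0 < t" "t \<le> 1"
    and "g0 * (1 + (t * nv - t\<^sup>2 * nv / 2 + t * (b - c)) / s) \<le> g0 + t / s * (g0 * (b - c)) + t\<^sup>2 * K"
  shows "g0 * nv / (2 * s) \<le> t * K"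
proof -
  have "g0 * (1 + (t * nv - t\<^sup>2 * nv / 2 + t * (b - c)) / s) = g0 + g0 * (t * nv - t\<^sup>2 * nv / 2) / s + t / s * (g0 * (b - c))"
    using assms(2) by (simp add: field_simps)
  then have "g0 * (t * nv - t\<^sup>2 * nv / 2) / s \<le> t\<^sup>2 * K"
    using assms(6) by linarith
  then have "t * (g0 * (nv - t * nv / 2) / s) \<le> t * (t * K)"
    by (simp add: power2_eq_square field_simps)
  then have 1: "g0 * (nv - t * nv / 2) / s \<le> t * K" by (rule mult_left_le_imp_le[OF _ assms(4)])
  have "nv / 2 \<le> nv - t * nv / 2" using assms by (simp add: field_simps)
  then have "g0 * (nv / 2) / s \<le> g0 * (nv - t * nv / 2) / s"
    using assms by (intro divide_right_mono mult_left_mono) auto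
  with 1 show ?thesis by simp
qed

context setting begin

lemma G_lower:
  assumes "\<rho> > 0" "norm w \<ge> \<rho>" "m > 0" "\<forall>y\<in>cball 0 (\<rho>+1). h y \<ge> m"
  shows "G w \<ge> c0 * exp (- (norm w - \<rho> + 1)\<^sup>2 / (2 * s)) * m * measure lborel (ball (0::'a) 1)"
proof -
  define p where "p = (\<rho> / norm w) *\<^sub>R w"
  define K where "K = c0 * exp (- (norm w - \<rho> + 1)\<^sup>2 / (2 * s)) * m"
  have w0: "norm w > 0" using assms by linarith
  have np: "norm p = \<rho>" using w0 assms by (simp add: p_def)
  have "w - p = (1 - \<rho> / norm w) *\<^sub>R w" by (simp add: p_def algebra_simps)
  then have "norm (w - p) = \<bar>1 - \<rho> / norm w\<bar> * norm w" by simp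
  moreover have "\<bar>1 - \<rho> / norm w\<bar> = 1 - \<rho> / norm w" using w0 assms by (simp add: field_simps)
  ultimately have nwp: "norm (w - p) = norm w - \<rho>"
    using w0 by (simp add: field_simps)
  have pw: "indicator (ball p 1) y * K \<le> gauss_dens s w y * h y" for y
  proof (cases "y \<in> ball p 1")
    case True
    then have d: "norm (y - p) < 1" by (simp add: dist_norm norm_minus_commute)
    have "norm y \<le> norm p + norm (y - p)" by (rule norm_triangle_sub)
    then have "norm y \<le> \<rho> + 1" using d np by linarith
    then have hm: "m \<le> h y" using assms(4) by simp
    have "norm (y - w) \<le> norm (y - p) + norm (p - w)"
      by (metis diff_add_cancel norm_triangle_ineq add_diff_eq diff_diff_add)
    then have "norm (y - w) \<le> norm w - \<rho> + 1" using d nwp by (simp add: norm_minus_commute)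
    then have "(norm (y - w))\<^sup>2 \<le> (norm w - \<rho> + 1)\<^sup>2" by (intro power_mono) auto
    then have "exp (- (norm w - \<rho> + 1)\<^sup>2 / (2 * s)) \<le> exp (- (norm (y - w))\<^sup>2 / (2 * s))"
      using s_pos by (simp add: divide_right_mono)
    then have "c0 * exp (- (norm w - \<rho> + 1)\<^sup>2 / (2 * s)) \<le> gauss_dens s w y"
      unfolding gd_eq using c0_pos by (intro mult_left_mono) auto
    then have "K \<le> gauss_dens s w y * h y"
      unfolding K_def using hm assms(3) c0_pos gd_pos[of w y] by (intro mult_mono) auto
    then show ?thesis using True by simp
  next
    case False
    then show ?thesis using gd_pos[of w y] h_pos[of y] by simp
  qed
  have ib: "integrable lborel (\<lambda>y. indicator (ball p 1) y * K)"
    by (intro integrable_mult_left integrable_real_indicator emeasure_bounded_finite) auto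
  have "(\<integral>y. indicator (ball p 1) y * K \<partial>lborel) \<le> G w"
    unfolding G_def using ib intG pw by (intro Bochner_Integration.integral_mono) auto
  moreover have "(\<integral>y. indicator (ball p 1) y * K \<partial>lborel) = measure lborel (ball p 1) * K"
    by simp
  moreover have "measure lborel (ball p 1) = measure lborel (ball (0::'a) 1)" by (simp add: content_ball)
  ultimately show ?thesis by (simp add: K_def algebra_simps)
qed

end

context setting begin

lemma T_surj: "\<exists>w. N w /\<^sub>R G w = z"
proof -
  define \<rho> where "\<rho> = norm z + 2"
  have \<rho>0: "\<rho> > 0" by (simp add: \<rho>_def add_nonneg_pos)
  obtain x0 where x0: "x0 \<in> cball (0::'a) (\<rho>+1)" "\<forall>y\<in>cball 0 (\<rho>+1). h x0 \<le> h y"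
    using continuous_attains_inf[of "cball (0::'a) (\<rho>+1)" h] \<rho>0 continuous_on_subset[OF h_cont]
    by auto
  define m where "m = h x0"
  have m0: "m > 0" using h_pos by (simp add: m_def)
  have mb: "\<forall>y\<in>cball 0 (\<rho>+1). h y \<ge> m" using x0 by (simp add: m_def)
  define V where "V = measure lborel (ball (0::'a) 1)"
  have V0: "V > 0" unfolding V_def using content_ball_gt_0_iff[of "0::'a" 1] by simp
  define \<Phi> where "\<Phi> w = s * ln (G w) + (norm w)\<^sup>2 / 2 - z \<bullet> w" for w
  have \<Phi>c: "continuous_on UNIV \<Phi>"
    unfolding \<Phi>_def using G_pos
    by (intro continuous_intros G_cont) (auto simp: less_imp_neq[symmetric])
  define L where "L = s * ln (c0 * m * V)"
  have bound: "\<Phi> w \<ge> L + norm w - (norm z + 1)\<^sup>2 / 2" if "norm w \<ge> \<rho>" for w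
  proof -
    define a where "a = norm w - \<rho> + 1"
    have "G w \<ge> c0 * exp (- a\<^sup>2 / (2 * s)) * m * V"
      using G_lower[OF \<rho>0 that m0 mb] by (simp add: a_def V_def)
    then have "ln (G w) \<ge> ln (c0 * m * V * exp (- a\<^sup>2 / (2 * s)))"
      using c0_pos m0 V0 by (subst ln_le_cancel_iff) (auto simp: G_pos algebra_simps)
    also have "ln (c0 * m * V * exp (- a\<^sup>2 / (2 * s))) = ln (c0 * m * V) - a\<^sup>2 / (2 * s)"
      using c0_pos m0 V0 by (simp add: ln_mult)
    finally have "s * ln (G w) \<ge> s * (ln (c0 * m * V) - a\<^sup>2 / (2 * s))"
      using s_pos by (intro mult_left_mono) auto
    then have 1: "s * ln (G w) \<ge> L - a\<^sup>2 / 2"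
      using s_pos by (simp add: L_def right_diff_distrib)
    have 2: "z \<bullet> w \<le> norm z * norm w" by (rule norm_cauchy_schwarz)
    have 3: "- a\<^sup>2 / 2 + (norm w)\<^sup>2 / 2 - norm z * norm w = norm w - (norm z + 1)\<^sup>2 / 2"
      by (simp add: a_def \<rho>_def power2_eq_square field_simps)
    show ?thesis using 1 2 3 unfolding \<Phi>_def by linarith
  qed
  define R where "R = max \<rho> (\<Phi> 0 - L + (norm z + 1)\<^sup>2 / 2 + 1)"
  have R0: "R > 0" using \<rho>0 by (simp add: R_def)
  obtain w where w: "w \<in> cball (0::'a) R" "\<forall>y\<in>cball 0 R. \<Phi> w \<le> \<Phi> y"
    using continuous_attains_inf[of "cball (0::'a) R" \<Phi>] R0 continuous_on_subset[OF \<Phi>c]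
    by auto
  have wmin: "\<Phi> w \<le> \<Phi> y" for y
  proof (cases "y \<in> cball 0 R")
    case True then show ?thesis using w by auto
  next
    case False
    then have "norm y > R" by simp
    then have "norm y \<ge> \<rho>" "norm y > \<Phi> 0 - L + (norm z + 1)\<^sup>2 / 2 + 1" by (auto simp: R_def)
    then have "\<Phi> y > \<Phi> 0" using bound[of y] by linarith
    moreover have "\<Phi> w \<le> \<Phi> 0" using w R0 by auto
    ultimately show ?thesis by linarith
  qed
  define T where "T = N w /\<^sub>R G w"
  have g0: "G w > 0" by (rule G_pos)
  have NT: "N w = G w *\<^sub>R T" using g0 by (simp add: T_def)
  have "T = z"
  proof (rule ccontr)
    assume "T \<noteq> z"
    define v where "v = z - T"
    define nv where "nv = (norm v)\<^sup>2"
    have nv0: "nv > 0" using \<open>T \<noteq> z\<close> by (simp add: nv_def v_def)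
    define K where "K = exp (2 * (norm v)\<^sup>2 / s) * (G (w + 2 *\<^sub>R v) + G (w - 2 *\<^sub>R v))"
    have K0: "K \<ge> 0" unfolding K_def using G_pos by (intro mult_nonneg_nonneg add_nonneg_nonneg) (auto intro: less_imp_le)
    have key: "G w * nv / (2 * s) \<le> t * K" if t: "0 < t" "t \<le> 1" for t
    proof -
      define b where "b = T \<bullet> v"
      define c where "c = w \<bullet> v"
      have zv: "z \<bullet> v = b + nv" by (simp add: b_def nv_def v_def power2_norm_eq_inner inner_diff_left inner_diff_right inner_commute)
      have nw: "(norm (w + t *\<^sub>R v))\<^sup>2 = (norm w)\<^sup>2 + 2 * t * c + t\<^sup>2 * nv"
      proof -
        have "(norm (w + t *\<^sub>R v))\<^sup>2 = (w + t *\<^sub>R v) \<bullet> (w + t *\<^sub>R v)" by (simp add: power2_norm_eq_inner)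
        also have "\<dots> = w \<bullet> w + 2 * t * (w \<bullet> v) + t\<^sup>2 * (v \<bullet> v)"
          by (simp add: inner_add_left inner_add_right inner_commute power2_eq_square algebra_simps)
        also have "\<dots> = (norm w)\<^sup>2 + 2 * t * c + t\<^sup>2 * nv" by (simp add: c_def nv_def power2_norm_eq_inner)
        finally show ?thesis .
      qed
      have zw: "z \<bullet> (w + t *\<^sub>R v) = z \<bullet> w + t * (b + nv)"
        using zv by (simp add: inner_add_right)
      have "\<Phi> w \<le> \<Phi> (w + t *\<^sub>R v)" by (rule wmin)
      then have "s * ln (G (w + t *\<^sub>R v)) \<ge> s * ln (G w) + (t * nv - t\<^sup>2 * nv / 2 + t * (b - c))"
        unfolding \<Phi>_def nw zw by (simp add: field_simps)
      then have "ln (G (w + t *\<^sub>R v)) \<ge> ln (G w) + (t * nv - t\<^sup>2 * nv / 2 + t * (b - c)) / s"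
        using s_pos by (simp add: field_simps)
      then have "exp (ln (G w) + (t * nv - t\<^sup>2 * nv / 2 + t * (b - c)) / s) \<le> G (w + t *\<^sub>R v)"
        using G_pos by (metis exp_le_cancel_iff exp_ln)
      moreover have "exp (ln (G w) + (t * nv - t\<^sup>2 * nv / 2 + t * (b - c)) / s) \<ge> G w * (1 + (t * nv - t\<^sup>2 * nv / 2 + t * (b - c)) / s)"
        using g0 by (simp add: exp_add exp_ge_add_one_self)
      moreover have "G (w + t *\<^sub>R v) \<le> G w + t / s * (G w * (b - c)) + t\<^sup>2 * K"
      proof -
        have "(N w - G w *\<^sub>R w) \<bullet> v = G w * (b - c)"
          by (simp add: NT b_def c_def inner_diff_left algebra_simps)
        then show ?thesis using upper[OF t, of w v] by (simp add: K_def mult.assoc)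
      qed
      ultimately have "G w * (1 + (t * nv - t\<^sup>2 * nv / 2 + t * (b - c)) / s) \<le> G w + t / s * (G w * (b - c)) + t\<^sup>2 * K"
        by linarith
      then show ?thesis by (rule alg[OF g0 s_pos nv0 t])
    qed
    have "G w * nv / (2 * s) > 0" using g0 nv0 s_pos by simp
    from small_t[OF this K0 key] show False .
  qed
  then show ?thesis unfolding T_def by blast
qed

end


theorem lemma1:
  fixes f :: "'a::euclidean_space \<Rightarrow> real" and lam del :: real
  assumes "lam > 0" and "del > 0"
    and "continuous_on UNIV f"
    and "\<exists>x0. \<forall>y. f x0 \<le> f y"
    and "(\<integral>\<^sup>+ y. ennreal (exp (- f y / del)) \<partial>lborel) < \<infinity>"
  shows "\<forall>z. H_fun lam del f z \<ge>
            - ln (\<integral>y. exp (- f y / del) \<partial>lborel) + real DIM('a) / 2 * ln (2 * pi * lam * del)"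
proof
  fix z :: 'a
  define h where "h y = exp (- f y / del)" for y
  have hc: "continuous_on UNIV h"
    unfolding h_def using assms(2,3) by (intro continuous_intros) auto
  have hm: "h \<in> borel_measurable lborel"
    using borel_measurable_continuous_onI[OF hc] by simp
  have hi: "integrable lborel h"
  proof (rule integrableI_bounded[OF hm])
    show "(\<integral>\<^sup>+ y. ennreal (norm (h y)) \<partial>lborel) < \<infinity>"
      using assms(5) by (simp add: h_def)
  qed
  interpret S: setting "lam * del" h
    by unfold_locales (use assms(1,2) hc hi in \<open>auto simp: h_def\<close>)
  define T where "T w = S.N w /\<^sub>R S.G w" for w
  have zp: "zprox lam del f = T"
    by (rule ext) (simp add: zprox_def gauss_exp_def T_def S.N_def S.G_def h_def)
  have "surj T" unfolding surj_def
  proof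
    fix y
    obtain x where "S.N x /\<^sub>R S.G x = y" using S.T_surj by blast
    then show "\<exists>x. y = T x" unfolding T_def by auto
  qed
  define w where "w = inv T z"
  have Tw: "T w = z" unfolding w_def by (rule surj_f_inv_f[OF \<open>surj T\<close>])
  have sm: "soft_moreau lam del f w = - del * ln (S.G w)"
    by (simp add: soft_moreau_def gauss_exp_def S.G_def h_def)
  have H: "H_fun lam del f z = - (norm (w - z))\<^sup>2 / (2 * (lam * del)) - ln (S.G w)"
    unfolding H_fun_def Let_def zp w_def[symmetric] sm using assms(2) by (simp add: field_simps)
  have gw: "S.G w > 0" by (rule S.G_pos)
  have e: "S.N w /\<^sub>R S.G w = z" using Tw by (simp add: T_def)
  have Nw: "S.N w = S.G w *\<^sub>R (w + (z - w))" using gw by (simp add: e[symmetric])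
  have "S.G z \<ge> exp ((norm (z - w))\<^sup>2 / (2 * (lam * del))) * S.G w"
    using S.partA[OF Nw] by simp
  then have "ln (S.G z) \<ge> ln (exp ((norm (z - w))\<^sup>2 / (2 * (lam * del))) * S.G w)"
    using gw S.G_pos[of z] by (subst ln_le_cancel_iff) auto
  then have l1: "ln (S.G z) \<ge> (norm (w - z))\<^sup>2 / (2 * (lam * del)) + ln (S.G w)"
    using gw by (simp add: ln_mult norm_minus_commute)
  define C where "C = (\<integral>y. h y \<partial>lborel)"
  have gz: "S.G z \<le> S.c0 * C" unfolding C_def by (rule S.G_le)
  have gz0: "S.G z > 0" by (rule S.G_pos)
  have c00: "S.c0 > 0" by (rule S.c0_pos)
  have "S.c0 * C > 0" using gz gz0 by linarith
  then have C0: "C > 0" using c00 by (simp add: zero_less_mult_iff)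
  have "ln (S.G z) \<le> ln (S.c0 * C)" using gz gz0 by simp
  also have "\<dots> = ln S.c0 + ln C" using c00 C0 by (simp add: ln_mult)
  also have "ln S.c0 = - real DIM('a) / 2 * ln (2 * pi * lam * del)"
    unfolding S.c0_def using assms(1,2) by (simp add: mult.assoc)
  finally have l2: "ln (S.G z) \<le> - real DIM('a) / 2 * ln (2 * pi * lam * del) + ln C" .
  have "H_fun lam del f z \<ge> - ln (S.G z)" unfolding H using l1 by linarith
  then show "H_fun lam del f z \<ge> - ln (\<integral>y. exp (- f y / del) \<partial>lborel) + real DIM('a) / 2 * ln (2 * pi * lam * del)"
    using l2 unfolding C_def h_def by linarith
qed


end
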